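(* Let $\varepsilon_1>0$, $0<k<1$ and $E\ge1$. Then there exists $\varepsilon>0$ with the following property. Let $\mathcal{B}\subset\mathbb{R}^2$ be a (filled) ellipse centered at the origin, of eccentricity $\le E$ and diameter $\le\varepsilon_1$, and let $L\in\mathrm{SL}(2,\mathbb{R})$ satisfy $\|L-I\|<\varepsilon$ and $L(\mathcal{B})=\mathcal{B}$. Then there exists a $C^1$ area-preserving diffeomorphism $h:\mathbb{R}^2\to\mathbb{R}^2$ such that, with $\mathcal{B}'=\sqrt{k}\,\mathcal{B}$: (i) $z\notin\mathcal{B}\Rightarrow h(z)=z$; (ii) $z\in\mathcal{B}'\Rightarrow h(z)=L(z)$; (iii) $h$ preserves every ellipse $t\mathcal{B}$, $t>0$; (iv) $|h(z)-z|\le\varepsilon_1$ for all $z$; (v) $\|Dh_z-I\|\le\varepsilon_1$ for all $z$.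
   Context: A (filled) ellipse has eccentricity $E$ if it is the image of a disk under some $L\in\mathrm{SL}(2,\mathbb{R})$ with $\|L\|=E$; equivalently $E=\sqrt{\text{major axis}/\text{minor axis}}$. *)

theory Defs
  imports "HOL-Analysis.Analysis"
begin

definition opnorm :: "real^2^2 \<Rightarrow> real" where
  "opnorm M = onorm (\<lambda>x. M *v x)"

text \<open>A filled ellipse centred at the origin of eccentricity at most E:
  the image of a closed disk of radius r > 0 under some A in SL(2,R) with norm A <= E.\<close>
definition centered_ellipse_ecc_le :: "real \<Rightarrow> (real^2) set \<Rightarrow> bool" where
  "centered_ellipse_ecc_le E B \<longleftrightarrow>
     (\<exists>A r. det A = 1 \<and> opnorm A \<le> E \<and> r > 0 \<and> B = (\<lambda>x. A *v x) ` cball 0 r)"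

definition area_preserving :: "(real^2 \<Rightarrow> real^2) \<Rightarrow> bool" where
  "area_preserving h \<longleftrightarrow> h \<in> borel_measurable borel \<and>
     (\<forall>S \<in> sets borel. emeasure lborel (h -` S) = emeasure lborel S)"

definition C1_with_deriv :: "(real^2 \<Rightarrow> real^2) \<Rightarrow> (real^2 \<Rightarrow> real^2^2) \<Rightarrow> bool" where
  "C1_with_deriv h Dh \<longleftrightarrow>
     (\<forall>z. (h has_derivative (\<lambda>v. Dh z *v v)) (at z)) \<and> continuous_on UNIV Dh"

definition C1_diffeo :: "(real^2 \<Rightarrow> real^2) \<Rightarrow> bool" where
  "C1_diffeo h \<longleftrightarrow> bij h \<and> (\<exists>Dh. C1_with_deriv h Dh) \<and> (\<exists>Dg. C1_with_deriv (inv h) Dg)"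

end

theory Submission
  imports Defs
begin


definition vec2 :: "real \<Rightarrow> real \<Rightarrow> real^2" where
  "vec2 a b = (\<chi> i. if i = 1 then a else b)"

lemma vec2_nth[simp]: "vec2 a b $ 1 = a" "vec2 a b $ 2 = b"
  by (auto simp: vec2_def)

definition mat2 :: "real \<Rightarrow> real \<Rightarrow> real \<Rightarrow> real \<Rightarrow> real^2^2" where
  "mat2 a b c d = (\<chi> i j. if i = 1 then (if j = 1 then a else b) else (if j = 1 then c else d))"

lemma mat2_nth[simp]: "mat2 a b c d $ 1 $ 1 = a" "mat2 a b c d $ 1 $ 2 = b"
  "mat2 a b c d $ 2 $ 1 = c" "mat2 a b c d $ 2 $ 2 = d"
  by (auto simp: mat2_def)

lemma vec2_eta: "x = vec2 (x$1) (x$2)"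
  by (simp add: vec_eq_iff forall_2)

lemma vec2_eq_iff: "(x = y) \<longleftrightarrow> x$1 = y$1 \<and> x$2 = y$2" for x y :: "real^2"
  by (simp add: vec_eq_iff forall_2)

lemma mat2_eta: "M = mat2 (M$1$1) (M$1$2) (M$2$1) (M$2$2)"
  by (simp add: vec_eq_iff forall_2)

lemma mat2_eq_iff: "(M = N) \<longleftrightarrow> M$1$1 = N$1$1 \<and> M$1$2 = N$1$2 \<and> M$2$1 = N$2$1 \<and> M$2$2 = N$2$2"
  for M N :: "real^2^2"
  by (simp add: vec_eq_iff forall_2)

lemma mat2_mult_vec: "mat2 a b c d *v x = vec2 (a*x$1 + b*x$2) (c*x$1 + d*x$2)"
  by (simp add: vec2_eq_iff matrix_vector_mult_def sum_2)

lemma mv_nth: "(M *v x) $ 1 = M$1$1 * x$1 + M$1$2 * x$2" "(M *v x) $ 2 = M$2$1 * x$1 + M$2$2 * x$2"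
  for M :: "real^2^2"
  by (simp_all add: matrix_vector_mult_def sum_2)

lemma mm_nth: "(M ** N) $ 1 $ 1 = M$1$1 * N$1$1 + M$1$2 * N$2$1"
  "(M ** N) $ 1 $ 2 = M$1$1 * N$1$2 + M$1$2 * N$2$2"
  "(M ** N) $ 2 $ 1 = M$2$1 * N$1$1 + M$2$2 * N$2$1"
  "(M ** N) $ 2 $ 2 = M$2$1 * N$1$2 + M$2$2 * N$2$2"
  for M N :: "real^2^2"
  by (simp_all add: matrix_matrix_mult_def sum_2)

lemma mat1_nth[simp]: "(mat 1 :: real^2^2) $ 1 $ 1 = 1" "(mat 1 :: real^2^2) $ 1 $ 2 = 0"
  "(mat 1 :: real^2^2) $ 2 $ 1 = 0" "(mat 1 :: real^2^2) $ 2 $ 2 = 1"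
  by (simp_all add: mat_def)

lemma det2: "det (M::real^2^2) = M$1$1 * M$2$2 - M$1$2 * M$2$1"
  by (rule det_2)

lemma norm2: "norm (x::real^2) = sqrt ((x$1)^2 + (x$2)^2)"
  by (simp add: norm_vec_def L2_set_def UNIV_2)

lemma norm2_sq: "(norm (x::real^2))^2 = (x$1)^2 + (x$2)^2"
  by (simp add: norm2)

lemma opnorm_le_entries: "opnorm M \<le> \<bar>M$1$1\<bar> + \<bar>M$1$2\<bar> + \<bar>M$2$1\<bar> + \<bar>M$2$2\<bar>"
proof -
  have "norm (M *v x) \<le> (\<bar>M$1$1\<bar> + \<bar>M$1$2\<bar> + \<bar>M$2$1\<bar> + \<bar>M$2$2\<bar>) * norm x" for x
  proof -
    have a1: "\<bar>x$1\<bar> \<le> norm x" "\<bar>x$2\<bar> \<le> norm x" by (rule component_le_norm_cart)+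
    have "norm (M *v x) \<le> \<bar>(M *v x)$1\<bar> + \<bar>(M *v x)$2\<bar>"
      using norm_le_l1_cart[of "M *v x"] by (simp add: sum_2)
    also have "\<dots> \<le> \<bar>M$1$1\<bar> * \<bar>x$1\<bar> + \<bar>M$1$2\<bar> * \<bar>x$2\<bar> + (\<bar>M$2$1\<bar> * \<bar>x$1\<bar> + \<bar>M$2$2\<bar> * \<bar>x$2\<bar>)"
      unfolding mv_nth by (intro add_mono; metis abs_mult abs_triangle_ineq)
    also have "\<dots> \<le> \<bar>M$1$1\<bar> * norm x + \<bar>M$1$2\<bar> * norm x + (\<bar>M$2$1\<bar> * norm x + \<bar>M$2$2\<bar> * norm x)"
      by (intro add_mono mult_left_mono a1 abs_ge_zero)
    finally show ?thesis by (simp add: algebra_simps)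
  qed
  then show ?thesis unfolding opnorm_def by (rule onorm_le)
qed

lemma opnorm_ge_entry: "\<bar>M$i$j\<bar> \<le> opnorm (M::real^2^2)"
proof -
  have "(M *v axis j 1) $ i = M$i$j"
    using exhaust_2[of j] by (auto simp: matrix_vector_mult_def axis_def sum_2)
  then have "\<bar>M$i$j\<bar> \<le> norm (M *v axis j 1)"
    by (metis component_le_norm_cart)
  also have "\<dots> \<le> opnorm M * norm (axis j (1::real))"
    unfolding opnorm_def by (rule onorm) simp
  finally show ?thesis by simp
qed

lemma opnorm_nonneg: "0 \<le> opnorm M"
  unfolding opnorm_def by (rule onorm_pos_le) simp

lemma opnorm_mult: "opnorm (M ** N) \<le> opnorm M * opnorm (N::real^2^2)"
proof -
  have "(\<lambda>x. (M ** N) *v x) = (\<lambda>x. M *v x) \<circ> (\<lambda>x. N *v x)"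
    by (auto simp: matrix_vector_mul_assoc)
  then show ?thesis unfolding opnorm_def
    by (metis onorm_compose matrix_vector_mul_bounded_linear)
qed

lemma opnorm_apply: "norm (M *v x) \<le> opnorm M * norm x"
  unfolding opnorm_def by (rule onorm) simp



definition sq0 :: "real \<Rightarrow> real" where "sq0 v = (max 0 v)^2"

lemma DERIV_sq0: "(sq0 has_real_derivative (2 * max 0 v)) (at v)"
proof (cases "v = 0")
  case True
  have "((\<lambda>y. (sq0 y - sq0 0) / (y - 0)) \<longlongrightarrow> 0) (at 0)"
  proof (rule Lim_null_comparison[where g="\<lambda>y. \<bar>y\<bar>"])
    show "\<forall>\<^sub>F y in at 0. norm ((sq0 y - sq0 0) / (y - 0)) \<le> \<bar>y\<bar>"
    proof (intro always_eventually allI)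
      fix y :: real
      have a: "0 \<le> sq0 y" "sq0 y \<le> y^2" unfolding sq0_def
        by (auto intro!: power_mono simp: max_def)
      have "\<bar>sq0 y / y\<bar> \<le> \<bar>y\<bar>"
      proof (cases "y = 0")
        case False
        then have "\<bar>sq0 y / y\<bar> = sq0 y / \<bar>y\<bar>" using a by (simp add: abs_divide)
        also have "\<dots> \<le> y^2 / \<bar>y\<bar>" using a by (simp add: divide_right_mono)
        also have "\<dots> = \<bar>y\<bar>"
        proof -
          have "y^2 = \<bar>y\<bar> * \<bar>y\<bar>" by (simp add: power2_eq_square)
          then show ?thesis using False by (metis abs_eq_0 nonzero_mult_div_cancel_right)
        qed
        finally show ?thesis .
      qed simp
      then show "norm ((sq0 y - sq0 0) / (y - 0)) \<le> \<bar>y\<bar>" by (simp add: sq0_def)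
    qed
    show "((\<lambda>y::real. \<bar>y\<bar>) \<longlongrightarrow> 0) (at 0)"
      using tendsto_rabs[OF tendsto_ident_at[of 0 UNIV]] by simp
  qed
  then show ?thesis using True by (simp add: has_field_derivative_iff)
next
  case False
  show ?thesis
  proof (cases "v > 0")
    case True
    have "((\<lambda>y. y^2) has_real_derivative (2 * v)) (at v)"
      by (auto intro!: derivative_eq_intros)
    then have "(sq0 has_real_derivative (2 * v)) (at v)"
      by (rule has_field_derivative_transform_within_open[where S="{0<..}"])
        (use True in \<open>auto simp: sq0_def\<close>)
    then show ?thesis using True by simp
  next
    case False
    with \<open>v \<noteq> 0\<close> have "v < 0" by simp
    have "((\<lambda>y. 0) has_real_derivative 0) (at v)"
      by (auto intro!: derivative_eq_intros)
    then have "(sq0 has_real_derivative 0) (at v)"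
      by (rule has_field_derivative_transform_within_open[where S="{..<0}"])
        (use \<open>v < 0\<close> in \<open>auto simp: sq0_def\<close>)
    then show ?thesis using \<open>v < 0\<close> by simp
  qed
qed

definition stepF :: "real \<Rightarrow> real" where
  "stepF v = sq0 v - 2 * sq0 (v - 1/2) + sq0 (v - 1)"
definition stepF' :: "real \<Rightarrow> real" where
  "stepF' v = 2 * (max 0 v - 2 * max 0 (v - 1/2) + max 0 (v - 1))"

lemma DERIV_stepF: "(stepF has_real_derivative stepF' v) (at v)"
proof -
  have d: "((\<lambda>v. sq0 (v - c)) has_real_derivative (2 * max 0 (v - c))) (at v)" for c
    using DERIV_chain2[OF DERIV_sq0, of "\<lambda>v. v - c" 1 v]
    by (simp add: DERIV_diff[OF DERIV_ident DERIV_const, simplified])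
  have "((\<lambda>v. sq0 (v - 0) - 2 * sq0 (v - 1/2) + sq0 (v - 1)) has_real_derivative
     (2 * max 0 (v - 0) - 2 * (2 * max 0 (v - 1/2)) + 2 * max 0 (v - 1))) (at v)"
    by (intro DERIV_add DERIV_diff DERIV_cmult d)
  then show ?thesis unfolding stepF_def stepF'_def by (simp add: algebra_simps)
qed

lemma cont_stepF': "continuous_on UNIV stepF'"
  unfolding stepF'_def by (intro continuous_intros)

lemma stepF_le0: "v \<le> 0 \<Longrightarrow> stepF v = 0"
  by (simp add: stepF_def sq0_def)
lemma stepF_ge1: "v \<ge> 1 \<Longrightarrow> stepF v = 1/2"
  by (simp add: stepF_def sq0_def power2_eq_square algebra_simps)
lemma stepF_bounds: "0 \<le> stepF v \<and> stepF v \<le> 1/2"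
proof -
  consider "v \<le> 0" | "0 \<le> v \<and> v \<le> 1/2" | "1/2 \<le> v \<and> v \<le> 1" | "1 \<le> v" by linarith
  then show ?thesis
  proof cases
    case 1 then show ?thesis by (simp add: stepF_le0)
  next
    case 2
    then have "stepF v = v^2" by (simp add: stepF_def sq0_def)
    moreover have "v^2 \<le> (1/2)^2" using 2 by (intro power_mono) auto
    ultimately show ?thesis by (simp add: power_divide)
  next
    case 3
    then have "stepF v = 1/2 - (1-v)^2" by (simp add: stepF_def sq0_def power2_eq_square algebra_simps)
    moreover have "(1-v)^2 \<le> (1/2)^2" using 3 by (intro power_mono) auto
    ultimately show ?thesis by (simp add: power_divide)
  next
    case 4 then show ?thesis by (simp add: stepF_ge1)
  qed
qed
lemma stepF'_bounds: "0 \<le> stepF' v \<and> stepF' v \<le> 1"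
proof -
  consider "v \<le> 0" | "0 \<le> v \<and> v \<le> 1/2" | "1/2 \<le> v \<and> v \<le> 1" | "1 \<le> v" by linarith
  then show ?thesis
  proof cases
    case 1 then have "max 0 v = 0" "max 0 (v-1/2) = 0" "max 0 (v-1) = 0" by auto
    then show ?thesis unfolding stepF'_def by simp
  next
    case 2 then have "max 0 v = v" "max 0 (v-1/2) = 0" "max 0 (v-1) = 0" by auto
    then show ?thesis unfolding stepF'_def using 2 by simp
  next
    case 3 then have "max 0 v = v" "max 0 (v-1/2) = v-1/2" "max 0 (v-1) = 0" by auto
    then show ?thesis unfolding stepF'_def using 3 by simp
  next
    case 4 then have "max 0 v = v" "max 0 (v-1/2) = v-1/2" "max 0 (v-1) = v-1" by auto
    then show ?thesis unfolding stepF'_def using 4 by simp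
  qed
qed
lemma stepF'_ge1: "v \<ge> 1 \<Longrightarrow> stepF' v = 0"
proof -
  assume "v \<ge> 1"
  then have "max 0 v = v" "max 0 (v-1/2) = v-1/2" "max 0 (v-1) = v-1" by auto
  then show ?thesis unfolding stepF'_def by simp
qed



lemma vec2_scaleR: "vec2 a b = a *\<^sub>R axis 1 1 + b *\<^sub>R axis 2 1"
  by (simp add: vec2_eq_iff axis_def)

lemma has_derivative_vec2:
  assumes "(f1 has_derivative f1') F" "(f2 has_derivative f2') F"
  shows "((\<lambda>x. vec2 (f1 x) (f2 x)) has_derivative (\<lambda>v. vec2 (f1' v) (f2' v))) F"
  unfolding vec2_scaleR
  by (intro has_derivative_add has_derivative_scaleR_left assms)

lemma has_derivative_nth: "((\<lambda>x. x $ i) has_derivative (\<lambda>v. v $ i)) F"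
  by (rule bounded_linear.has_derivative[OF bounded_linear_vec_nth has_derivative_ident])

definition nsq :: "real^2 \<Rightarrow> real" where "nsq x = (x$1)^2 + (x$2)^2"

lemma nsq_norm: "nsq x = (norm x)^2"
  by (simp add: nsq_def norm2_sq)

definition twist :: "(real \<Rightarrow> real) \<Rightarrow> (real \<Rightarrow> real) \<Rightarrow> real^2 \<Rightarrow> real^2" where
  "twist C S x = vec2 (C (nsq x) * x$1 - S (nsq x) * x$2) (S (nsq x) * x$1 + C (nsq x) * x$2)"

definition jac :: "(real \<Rightarrow> real) \<Rightarrow> (real \<Rightarrow> real) \<Rightarrow> (real \<Rightarrow> real) \<Rightarrow> (real \<Rightarrow> real) \<Rightarrow> real^2 \<Rightarrow> real^2^2" where
  "jac C S C' S' x =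
    mat2 (C (nsq x) + 2 * x$1 * (C' (nsq x) * x$1 - S' (nsq x) * x$2))
         (- S (nsq x) + 2 * x$2 * (C' (nsq x) * x$1 - S' (nsq x) * x$2))
         (S (nsq x) + 2 * x$1 * (S' (nsq x) * x$1 + C' (nsq x) * x$2))
         (C (nsq x) + 2 * x$2 * (S' (nsq x) * x$1 + C' (nsq x) * x$2))"

lemma has_derivative_nsq: "(nsq has_derivative (\<lambda>v. 2 * x$1 * v$1 + 2 * x$2 * v$2)) (at x)"
  unfolding nsq_def
  by (rule has_derivative_eq_rhs, (rule derivative_intros has_derivative_nth)+) (auto simp: algebra_simps)

lemma twist_deriv:
  assumes dC: "\<And>u. (C has_real_derivative C' u) (at u)"
    and dS: "\<And>u. (S has_real_derivative S' u) (at u)"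
  shows "(twist C S has_derivative (\<lambda>v. jac C S C' S' x *v v)) (at x)"
proof -
  have cC: "((\<lambda>x. C (nsq x)) has_derivative (\<lambda>v. (2 * x$1 * v$1 + 2 * x$2 * v$2) * C' (nsq x))) (at x)"
    by (rule DERIV_compose_FDERIV[OF dC has_derivative_nsq])
  have cS: "((\<lambda>x. S (nsq x)) has_derivative (\<lambda>v. (2 * x$1 * v$1 + 2 * x$2 * v$2) * S' (nsq x))) (at x)"
    by (rule DERIV_compose_FDERIV[OF dS has_derivative_nsq])
  show ?thesis
    unfolding twist_def
    apply (rule has_derivative_eq_rhs)
     apply (rule has_derivative_vec2)
      apply (rule has_derivative_diff)
       apply (rule has_derivative_mult[OF cC has_derivative_nth])
      apply (rule has_derivative_mult[OF cS has_derivative_nth])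
     apply (rule has_derivative_add)
      apply (rule has_derivative_mult[OF cS has_derivative_nth])
     apply (rule has_derivative_mult[OF cC has_derivative_nth])
    apply (auto simp: jac_def mat2_mult_vec vec2_eq_iff algebra_simps)
    done
qed


lemma continuous_on_mat2:
  assumes "continuous_on T a" "continuous_on T b" "continuous_on T c" "continuous_on T d"
  shows "continuous_on T (\<lambda>x. mat2 (a x) (b x) (c x) (d x))"
  unfolding mat2_def
proof (intro continuous_on_vec_lambda)
  fix i j :: 2
  show "continuous_on T (\<lambda>x. if i = 1 then if j = 1 then a x else b x else if j = 1 then c x else d x)"
    by (cases "i = 1"; cases "j = 1") (simp_all add: assms)
qed

lemma continuous_on_nsq: "continuous_on T nsq"
  unfolding nsq_def by (intro continuous_intros)

lemma jac_cont:
  assumes "continuous_on UNIV C" "continuous_on UNIV S" "continuous_on UNIV C'" "continuous_on UNIV S'"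
  shows "continuous_on UNIV (jac C S C' S')"
proof -
  have c: "continuous_on UNIV (\<lambda>x. F (nsq x))" if "continuous_on UNIV F" for F
    by (rule continuous_on_compose2[OF that continuous_on_nsq]) auto
  show ?thesis
    unfolding jac_def
    by (intro continuous_on_mat2 continuous_intros c assms)
qed

lemma twist_nsq:
  assumes "\<And>u. (C u)^2 + (S u)^2 = 1"
  shows "nsq (twist C S x) = nsq x"
proof -
  have "nsq (twist C S x) = ((C (nsq x))^2 + (S (nsq x))^2) * nsq x"
    unfolding twist_def by (simp add: nsq_def power2_eq_square algebra_simps)
  then show ?thesis using assms by simp
qed

lemma twist_norm:
  assumes "\<And>u. (C u)^2 + (S u)^2 = 1"
  shows "norm (twist C S x) = norm x"
  using twist_nsq[OF assms, where x=x] by (simp add: nsq_norm power2_eq_iff_nonneg)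

lemma twist_inv:
  assumes "\<And>u. (C u)^2 + (S u)^2 = 1"
  shows "twist C (\<lambda>u. - S u) (twist C S x) = x"
proof -
  have n: "nsq (twist C S x) = nsq x" by (rule twist_nsq[OF assms])
  have e: "(C (nsq x))^2 + (S (nsq x))^2 = 1" by (rule assms)
  obtain c s p q where d: "c = C (nsq x)" "s = S (nsq x)" "p = x$1" "q = x$2" by blast
  have e': "c^2 + s^2 = 1" using e d by simp
  have "c * (c * p - s * q) - - s * (s * p + c * q) = (c^2 + s^2) * p"
       "- s * (c * p - s * q) + c * (s * p + c * q) = (c^2 + s^2) * q"
    by (simp_all add: power2_eq_square algebra_simps)
  then show ?thesis
    unfolding twist_def[of C "\<lambda>u. - S u"] n
    unfolding twist_def vec2_eq_iff using e' d by simp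
qed

lemma jac_det:
  assumes "\<And>u. (C u)^2 + (S u)^2 = 1" "\<And>u. C u * C' u + S u * S' u = 0"
  shows "det (jac C S C' S' x) = 1"
proof -
  let ?u = "nsq x"
  have "det (jac C S C' S' x) = ((C ?u)^2 + (S ?u)^2) + 2 * nsq x * (C ?u * C' ?u + S ?u * S' ?u)"
    unfolding det2 jac_def by (simp add: nsq_def power2_eq_square algebra_simps)
  then show ?thesis using assms by simp
qed



definition psi :: "real \<Rightarrow> real \<Rightarrow> real \<Rightarrow> real" where
  "psi a b u = 1 - 2 * stepF ((u - a) / (b - a))"
definition psi' :: "real \<Rightarrow> real \<Rightarrow> real \<Rightarrow> real" where
  "psi' a b u = - 2 * stepF' ((u - a) / (b - a)) / (b - a)"

definition Cf where "Cf \<theta> a b u = cos (\<theta> * psi a b u)"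
definition Sf where "Sf \<theta> a b u = sin (\<theta> * psi a b u)"
definition Cf' where "Cf' \<theta> a b u = - sin (\<theta> * psi a b u) * (\<theta> * psi' a b u)"
definition Sf' where "Sf' \<theta> a b u = cos (\<theta> * psi a b u) * (\<theta> * psi' a b u)"

lemma DERIV_psi: "(psi a b has_real_derivative psi' a b u) (at u)"
proof -
  have "((\<lambda>u. (u - a) / (b - a)) has_real_derivative 1 / (b - a)) (at u)"
    by (rule DERIV_cdivide) (auto intro!: derivative_eq_intros)
  from DERIV_chain2[OF DERIV_stepF this]
  have h: "((\<lambda>u. stepF ((u - a) / (b - a))) has_real_derivative stepF' ((u - a) / (b - a)) * (1 / (b - a))) (at u)" .
  show ?thesis unfolding psi_def[abs_def] psi'_def
    using DERIV_diff[OF DERIV_const[of 1] DERIV_cmult[OF h, of 2]] by simp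
qed

lemma cont_psi: "continuous_on UNIV (psi a b)"
  using DERIV_psi by (meson DERIV_isCont continuous_at_imp_continuous_on)

lemma cont_psi': "continuous_on UNIV (psi' a b)"
proof -
  have "continuous_on UNIV (\<lambda>u. stepF' ((u - a) / (b - a)))"
  proof (rule continuous_on_compose2[OF cont_stepF'])
    have "((\<lambda>u. (u - a) / (b - a)) has_real_derivative 1 / (b - a)) (at u)" for u
      by (rule DERIV_cdivide) (auto intro!: derivative_eq_intros)
    then show "continuous_on UNIV (\<lambda>u. (u - a) / (b - a))"
      by (meson DERIV_isCont continuous_at_imp_continuous_on)
  qed auto
  then have "continuous_on UNIV (\<lambda>u. (-2 / (b - a)) * stepF' ((u - a) / (b - a)))"
    by (rule continuous_on_mult_left)
  moreover have "psi' a b = (\<lambda>u. (-2 / (b - a)) * stepF' ((u - a) / (b - a)))"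
    by (auto simp: psi'_def fun_eq_iff)
  ultimately show ?thesis by simp
qed

lemma psi_le_a: "a < b \<Longrightarrow> u \<le> a \<Longrightarrow> psi a b u = 1"
  unfolding psi_def by (subst stepF_le0) (auto simp: divide_nonpos_pos)

lemma psi_ge_b: "a < b \<Longrightarrow> u \<ge> b \<Longrightarrow> psi a b u = 0"
  unfolding psi_def by (subst stepF_ge1) auto

lemma psi'_ge_b: "a < b \<Longrightarrow> u \<ge> b \<Longrightarrow> psi' a b u = 0"
  unfolding psi'_def by (subst stepF'_ge1) auto

lemma psi_bounds: "0 \<le> psi a b u \<and> psi a b u \<le> 1"
  unfolding psi_def using stepF_bounds[of "(u - a) / (b - a)"] by auto

lemma psi'_bound: "a < b \<Longrightarrow> \<bar>psi' a b u\<bar> \<le> 2 / (b - a)"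
  unfolding psi'_def using stepF'_bounds[of "(u - a) / (b - a)"]
  by (auto simp: abs_mult abs_divide divide_right_mono)

lemma u_psi'_bound:
  assumes "a < b" "0 \<le> u" "0 \<le> b"
  shows "u * \<bar>psi' a b u\<bar> \<le> 2 * b / (b - a)"
proof (cases "u \<ge> b")
  case True then show ?thesis using assms psi'_ge_b by simp
next
  case False
  then have "u * \<bar>psi' a b u\<bar> \<le> b * (2 / (b - a))"
    using assms psi'_bound[of a b u] by (intro mult_mono) auto
  then show ?thesis by (simp add: mult.commute)
qed

lemma DERIV_Cf: "(Cf \<theta> a b has_real_derivative Cf' \<theta> a b u) (at u)"
proof -
  have "((\<lambda>u. cos (\<theta> * psi a b u)) has_real_derivative - sin (\<theta> * psi a b u) * (\<theta> * psi' a b u)) (at u)"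
    by (rule DERIV_chain2[OF DERIV_cos DERIV_cmult[OF DERIV_psi]])
  then show ?thesis by (simp add: Cf_def[abs_def] Cf'_def)
qed

lemma DERIV_Sf: "(Sf \<theta> a b has_real_derivative Sf' \<theta> a b u) (at u)"
proof -
  have "((\<lambda>u. sin (\<theta> * psi a b u)) has_real_derivative cos (\<theta> * psi a b u) * (\<theta> * psi' a b u)) (at u)"
    by (rule DERIV_chain2[OF DERIV_sin DERIV_cmult[OF DERIV_psi]])
  then show ?thesis by (simp add: Sf_def[abs_def] Sf'_def)
qed

lemma CS_sq: "(Cf \<theta> a b u)^2 + (Sf \<theta> a b u)^2 = 1"
  unfolding Cf_def Sf_def by simp

lemma CS_d: "Cf \<theta> a b u * Cf' \<theta> a b u + Sf \<theta> a b u * Sf' \<theta> a b u = 0"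
  unfolding Cf_def Sf_def Cf'_def Sf'_def by (simp add: algebra_simps)

lemma cont_CS: "continuous_on UNIV (Cf \<theta> a b)" "continuous_on UNIV (Sf \<theta> a b)"
  "continuous_on UNIV (Cf' \<theta> a b)" "continuous_on UNIV (Sf' \<theta> a b)"
proof -
  have p: "continuous_on UNIV (\<lambda>u. F (\<theta> * psi a b u))" if "continuous_on UNIV F" for F :: "real \<Rightarrow> real"
    by (rule continuous_on_compose2[OF that]) (auto intro!: continuous_intros cont_psi[THEN continuous_on_subset])
  show "continuous_on UNIV (Cf \<theta> a b)" unfolding Cf_def[abs_def]
    by (rule p) (intro continuous_intros)
  show "continuous_on UNIV (Sf \<theta> a b)" unfolding Sf_def[abs_def]
    by (rule p) (intro continuous_intros)
  show "continuous_on UNIV (Cf' \<theta> a b)" unfolding Cf'_def[abs_def]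
    using p[of sin] cont_psi'[of a b] cont_psi[of a b] by (intro continuous_intros) (auto intro: continuous_intros)
  show "continuous_on UNIV (Sf' \<theta> a b)" unfolding Sf'_def[abs_def]
    using p[of cos] cont_psi'[of a b] cont_psi[of a b] by (intro continuous_intros) (auto intro: continuous_intros)
qed



lemma cos_minus_one_le: "\<bar>cos t - 1\<bar> \<le> \<bar>t\<bar>" for t :: real
proof -
  have "cos t = cos (2 * (t/2))" by simp
  also have "\<dots> = 1 - 2 * (sin (t/2))^2" by (rule cos_double_sin)
  finally have "\<bar>cos t - 1\<bar> = 2 * (sin (t/2))^2" by simp
  also have "\<dots> \<le> 2 * \<bar>sin (t/2)\<bar>"
  proof -
    have e: "(sin (t/2))^2 = \<bar>sin (t/2)\<bar> * \<bar>sin (t/2)\<bar>" by (simp add: power2_eq_square)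
    have "\<bar>sin (t/2)\<bar> * \<bar>sin (t/2)\<bar> \<le> \<bar>sin (t/2)\<bar>"
      by (rule mult_left_le_one_le) auto
    then show ?thesis unfolding e by simp
  qed
  also have "\<dots> \<le> 2 * \<bar>t/2\<bar>" using abs_sin_x_le_abs_x[of "t/2"] by simp
  finally show ?thesis by simp
qed

lemma entry_bd:
  fixes c' s' p q d :: real
  assumes "\<bar>c'\<bar> \<le> d" "\<bar>s'\<bar> \<le> d"
  shows "\<bar>2 * p * (c' * p - s' * q)\<bar> \<le> 4 * (d * (p^2 + q^2))"
proof -
  have d0: "0 \<le> d" using assms(1) by linarith
  have "\<bar>c' * p - s' * q\<bar> \<le> \<bar>c'\<bar> * \<bar>p\<bar> + \<bar>s'\<bar> * \<bar>q\<bar>"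
    using abs_triangle_ineq4[of "c' * p" "s' * q"] by (simp add: abs_mult)
  also have "\<dots> \<le> d * \<bar>p\<bar> + d * \<bar>q\<bar>"
    by (intro add_mono mult_right_mono assms) auto
  finally have 1: "\<bar>c' * p - s' * q\<bar> \<le> d * (\<bar>p\<bar> + \<bar>q\<bar>)" by (simp add: algebra_simps)
  have "\<bar>2 * p * (c' * p - s' * q)\<bar> = 2 * \<bar>p\<bar> * \<bar>c' * p - s' * q\<bar>" by (simp add: abs_mult)
  also have "\<dots> \<le> 2 * \<bar>p\<bar> * (d * (\<bar>p\<bar> + \<bar>q\<bar>))" using 1 by (intro mult_left_mono) auto
  also have "\<dots> = 2 * d * (\<bar>p\<bar> * \<bar>p\<bar> + \<bar>p\<bar> * \<bar>q\<bar>)" by (simp add: algebra_simps)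
  also have "\<dots> \<le> 2 * d * (2 * (p^2 + q^2))"
  proof (intro mult_left_mono)
    have "\<bar>p\<bar> * \<bar>q\<bar> \<le> p^2 + q^2"
    proof -
      have "0 \<le> (\<bar>p\<bar> - \<bar>q\<bar>)^2" by simp
      then have "2 * (\<bar>p\<bar> * \<bar>q\<bar>) \<le> \<bar>p\<bar>^2 + \<bar>q\<bar>^2" unfolding power2_diff by simp
      moreover have "0 \<le> \<bar>p\<bar> * \<bar>q\<bar>" by simp
      ultimately show ?thesis by (simp only: power2_abs)
    qed
    then show "\<bar>p\<bar> * \<bar>p\<bar> + \<bar>p\<bar> * \<bar>q\<bar> \<le> 2 * (p^2 + q^2)"
    proof -
      have "\<bar>p\<bar> * \<bar>p\<bar> = p^2" by (simp add: power2_eq_square)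
      moreover have "0 \<le> q^2" by simp
      ultimately show ?thesis using \<open>\<bar>p\<bar> * \<bar>q\<bar> \<le> p^2 + q^2\<close> by (smt (verit))
    qed
  qed (use d0 in auto)
  finally show ?thesis by (simp add: algebra_simps)
qed

lemma core_ineq: "\<bar>y\<bar> * (\<bar>y\<bar> + \<bar>z\<bar>) \<le> 2 * (y^2 + z^2)" for y z :: real
proof -
  have "\<bar>y\<bar> * \<bar>z\<bar> \<le> y^2 + z^2"
  proof -
    have "0 \<le> (\<bar>y\<bar> - \<bar>z\<bar>)^2" by simp
    then have "2 * (\<bar>y\<bar> * \<bar>z\<bar>) \<le> \<bar>y\<bar>^2 + \<bar>z\<bar>^2" unfolding power2_diff by simp
    moreover have "0 \<le> \<bar>y\<bar> * \<bar>z\<bar>" by simp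
    ultimately show ?thesis by (simp only: power2_abs)
  qed
  moreover have "\<bar>y\<bar> * (\<bar>y\<bar> + \<bar>z\<bar>) = y^2 + \<bar>y\<bar> * \<bar>z\<bar>"
    by (simp add: distrib_left power2_eq_square)
  moreover have "0 \<le> z^2" by simp
  moreover have "\<And>L Y P Z::real. P \<le> Y + Z \<Longrightarrow> L = Y + P \<Longrightarrow> 0 \<le> Z \<Longrightarrow> L \<le> 2 * (Y + Z)" by simp
  ultimately show ?thesis by blast
qed

lemma entry_bd2:
  fixes c' s' p q d y :: real
  assumes "\<bar>c'\<bar> \<le> d" "\<bar>s'\<bar> \<le> d" "y = p \<or> y = q"
  shows "\<bar>2 * y * (c' * p + s' * q)\<bar> \<le> 4 * (d * (p^2 + q^2))"
proof -
  have d0: "0 \<le> d" using assms(1) by linarith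
  have "\<bar>c' * p + s' * q\<bar> \<le> \<bar>c'\<bar> * \<bar>p\<bar> + \<bar>s'\<bar> * \<bar>q\<bar>"
    using abs_triangle_ineq[of "c' * p" "s' * q"] by (simp add: abs_mult)
  also have "\<dots> \<le> d * \<bar>p\<bar> + d * \<bar>q\<bar>"
    by (intro add_mono mult_right_mono assms) auto
  finally have 1: "\<bar>c' * p + s' * q\<bar> \<le> d * (\<bar>p\<bar> + \<bar>q\<bar>)" by (simp add: algebra_simps)
  have "\<bar>2 * y * (c' * p + s' * q)\<bar> = 2 * \<bar>y\<bar> * \<bar>c' * p + s' * q\<bar>" by (simp add: abs_mult)
  also have "\<dots> \<le> 2 * \<bar>y\<bar> * (d * (\<bar>p\<bar> + \<bar>q\<bar>))" using 1 by (intro mult_left_mono) auto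
  also have "\<dots> = 2 * d * (\<bar>y\<bar> * (\<bar>p\<bar> + \<bar>q\<bar>))" by (simp add: algebra_simps)
  also have "\<dots> \<le> 2 * d * (2 * (p^2 + q^2))"
  proof (intro mult_left_mono)
    show "\<bar>y\<bar> * (\<bar>p\<bar> + \<bar>q\<bar>) \<le> 2 * (p^2 + q^2)"
      using assms(3) core_ineq[of p q] core_ineq[of q p] by (auto simp: algebra_simps)
  qed (use d0 in auto)
  finally show ?thesis by (simp add: algebra_simps)
qed

lemma sum4_le: "(A::real) \<le> X \<Longrightarrow> B \<le> X \<Longrightarrow> C \<le> X \<Longrightarrow> D \<le> X \<Longrightarrow> A + B + C + D \<le> 4 * X"
  by simp

lemma jac_bound:
  assumes "0 \<le> a" "a < b"
  shows "opnorm (jac (Cf \<theta> a b) (Sf \<theta> a b) (Cf' \<theta> a b) (Sf' \<theta> a b) x - mat 1)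
          \<le> 4 * (\<bar>\<theta>\<bar> + 4 * (\<bar>\<theta>\<bar> * (2 * b / (b - a))))"
proof -
  define u where "u = nsq x"
  define p where "p = x$1"
  define q where "q = x$2"
  define d where "d = \<bar>\<theta>\<bar> * \<bar>psi' a b u\<bar>"
  define D where "D = \<bar>\<theta>\<bar> * (2 * b / (b - a))"
  define c where "c = Cf \<theta> a b u"
  define s where "s = Sf \<theta> a b u"
  define c' where "c' = Cf' \<theta> a b u"
  define s' where "s' = Sf' \<theta> a b u"
  have u: "u = p^2 + q^2" "0 \<le> u" unfolding u_def p_def q_def nsq_def by auto
  have tp: "\<bar>\<theta> * psi a b u\<bar> \<le> \<bar>\<theta>\<bar>"
    using psi_bounds[of a b u] by (auto simp: abs_mult intro: mult_left_le)
  have c1: "\<bar>c - 1\<bar> \<le> \<bar>\<theta>\<bar>" unfolding c_def Cf_def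
    using cos_minus_one_le[of "\<theta> * psi a b u"] tp by linarith
  have s1: "\<bar>s\<bar> \<le> \<bar>\<theta>\<bar>" unfolding s_def Sf_def
    using abs_sin_x_le_abs_x[of "\<theta> * psi a b u"] tp by linarith
  have c'd: "\<bar>c'\<bar> \<le> d" unfolding c'_def Cf'_def d_def
    by (auto simp: abs_mult intro!: mult_left_le_one_le)
  have s'd: "\<bar>s'\<bar> \<le> d" unfolding s'_def Sf'_def d_def
    by (auto simp: abs_mult intro!: mult_left_le_one_le)
  have mc'd: "\<bar>-c'\<bar> \<le> d" "\<bar>-s'\<bar> \<le> d" using c'd s'd by auto
  have dD: "d * (p^2 + q^2) \<le> D"
  proof -
    have "d * (p^2 + q^2) = \<bar>\<theta>\<bar> * (u * \<bar>psi' a b u\<bar>)" unfolding d_def u(1) by (simp add: algebra_simps)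
    also have "\<dots> \<le> \<bar>\<theta>\<bar> * (2 * b / (b - a))"
      using u_psi'_bound[of a b u] assms u(2) by (intro mult_left_mono) auto
    finally show ?thesis unfolding D_def .
  qed
  have e11: "\<bar>c + 2 * p * (c' * p - s' * q) - 1\<bar> \<le> \<bar>\<theta>\<bar> + 4 * D"
    using entry_bd2[OF c'd mc'd(2), of p p q] c1 dD by (simp add: algebra_simps; linarith)
  have e12: "\<bar>- s + 2 * q * (c' * p - s' * q)\<bar> \<le> \<bar>\<theta>\<bar> + 4 * D"
    using entry_bd2[OF c'd mc'd(2), of q p q] s1 dD by (simp add: algebra_simps; linarith)
  have e21: "\<bar>s + 2 * p * (s' * p + c' * q)\<bar> \<le> \<bar>\<theta>\<bar> + 4 * D"
    using entry_bd2[OF s'd c'd, of p p q] s1 dD by (simp add: algebra_simps; linarith)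
  have e22: "\<bar>c + 2 * q * (s' * p + c' * q) - 1\<bar> \<le> \<bar>\<theta>\<bar> + 4 * D"
    using entry_bd2[OF s'd c'd, of q p q] c1 dD by (simp add: algebra_simps; linarith)
  have "opnorm (jac (Cf \<theta> a b) (Sf \<theta> a b) (Cf' \<theta> a b) (Sf' \<theta> a b) x - mat 1)
     \<le> \<bar>c + 2 * p * (c' * p - s' * q) - 1\<bar> + \<bar>- s + 2 * q * (c' * p - s' * q)\<bar>
       + \<bar>s + 2 * p * (s' * p + c' * q)\<bar> + \<bar>c + 2 * q * (s' * p + c' * q) - 1\<bar>"
    using opnorm_le_entries[of "jac (Cf \<theta> a b) (Sf \<theta> a b) (Cf' \<theta> a b) (Sf' \<theta> a b) x - mat 1"]
    unfolding jac_def by (simp add: u_def[symmetric] p_def[symmetric] q_def[symmetric]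
       c_def[symmetric] s_def[symmetric] c'_def[symmetric] s'_def[symmetric])
  also have "\<dots> \<le> 4 * (\<bar>\<theta>\<bar> + 4 * D)" using sum4_le[OF e11 e12 e21 e22] .
  finally show ?thesis unfolding D_def .
qed



lemma cont_conj: 
  fixes F :: "real^2 \<Rightarrow> real^2^2"
  assumes "continuous_on S F"
  shows "continuous_on S (\<lambda>z. A ** F z ** N)"
  unfolding matrix_matrix_mult_def
  by (intro continuous_intros assms)

lemma Cf_neg: "Cf (-\<theta>) a b = Cf \<theta> a b" by (simp add: Cf_def fun_eq_iff)
lemma Sf_neg: "Sf (-\<theta>) a b = (\<lambda>u. - Sf \<theta> a b u)" by (simp add: Sf_def fun_eq_iff)

lemma twist_outside:
  assumes "a < b" "nsq x \<ge> b"
  shows "twist (Cf \<theta> a b) (Sf \<theta> a b) x = x"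
  using assms psi_ge_b[of a b "nsq x"] by (simp add: twist_def Cf_def Sf_def vec2_eq_iff)

lemma twist_inside:
  assumes "a < b" "nsq x \<le> a"
  shows "twist (Cf \<theta> a b) (Sf \<theta> a b) x = mat2 (cos \<theta>) (- sin \<theta>) (sin \<theta>) (cos \<theta>) *v x"
  using assms psi_le_a[of a b "nsq x"] by (simp add: twist_def Cf_def Sf_def vec2_eq_iff mv_nth)

definition adj2 :: "real^2^2 \<Rightarrow> real^2^2" where
  "adj2 A = mat2 (A$2$2) (- A$1$2) (- A$2$1) (A$1$1)"

lemma adj2_right: "det A = 1 \<Longrightarrow> A ** adj2 A = mat 1"
  by (simp add: mat2_eq_iff mm_nth adj2_def det2 algebra_simps)
lemma adj2_left: "det A = 1 \<Longrightarrow> adj2 A ** A = mat 1"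
  by (simp add: mat2_eq_iff mm_nth adj2_def det2 algebra_simps)

lemma opnorm_adj2: "opnorm (adj2 A) \<le> 4 * opnorm A"
proof -
  have "opnorm (adj2 A) \<le> \<bar>A$2$2\<bar> + \<bar>A$1$2\<bar> + \<bar>A$2$1\<bar> + \<bar>A$1$1\<bar>"
    using opnorm_le_entries[of "adj2 A"] by (simp add: adj2_def)
  also have "\<dots> \<le> 4 * opnorm A"
    using opnorm_ge_entry[of A] sum4_le by blast
  finally show ?thesis .
qed

definition hmap :: "real^2^2 \<Rightarrow> real \<Rightarrow> real \<Rightarrow> real \<Rightarrow> real^2 \<Rightarrow> real^2" where
  "hmap A \<theta> a b z = A *v twist (Cf \<theta> a b) (Sf \<theta> a b) (adj2 A *v z)"

definition Dhmap :: "real^2^2 \<Rightarrow> real \<Rightarrow> real \<Rightarrow> real \<Rightarrow> real^2 \<Rightarrow> real^2^2" where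
  "Dhmap A \<theta> a b z = A ** jac (Cf \<theta> a b) (Sf \<theta> a b) (Cf' \<theta> a b) (Sf' \<theta> a b) (adj2 A *v z) ** adj2 A"

lemma hmap_C1: "C1_with_deriv (hmap A \<theta> a b) (Dhmap A \<theta> a b)"
  unfolding C1_with_deriv_def
proof (intro conjI allI)
  fix z
  have d1: "((\<lambda>z. adj2 A *v z) has_derivative (\<lambda>v. adj2 A *v v)) (at z)"
    by (rule bounded_linear.has_derivative[OF matrix_vector_mul_bounded_linear has_derivative_ident])
  have d2: "(twist (Cf \<theta> a b) (Sf \<theta> a b) has_derivative
      (\<lambda>v. jac (Cf \<theta> a b) (Sf \<theta> a b) (Cf' \<theta> a b) (Sf' \<theta> a b) (adj2 A *v z) *v v)) (at (adj2 A *v z))"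
    by (rule twist_deriv[OF DERIV_Cf DERIV_Sf])
  have d3: "((\<lambda>y. A *v y) has_derivative (\<lambda>v. A *v v)) (at y)" for y
    by (rule bounded_linear.has_derivative[OF matrix_vector_mul_bounded_linear has_derivative_ident])
  have "((\<lambda>y. A *v y) \<circ> (twist (Cf \<theta> a b) (Sf \<theta> a b) \<circ> (\<lambda>z. adj2 A *v z)) has_derivative
     (\<lambda>v. A *v v) \<circ> ((\<lambda>v. jac (Cf \<theta> a b) (Sf \<theta> a b) (Cf' \<theta> a b) (Sf' \<theta> a b) (adj2 A *v z) *v v) \<circ> (\<lambda>v. adj2 A *v v))) (at z)"
    by (intro diff_chain_at d1 d2 d3)
  then show "(hmap A \<theta> a b has_derivative (\<lambda>v. Dhmap A \<theta> a b z *v v)) (at z)"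
    by (simp add: o_def hmap_def[abs_def] Dhmap_def matrix_vector_mul_assoc matrix_mul_assoc)
next
  have "continuous_on UNIV (\<lambda>z. jac (Cf \<theta> a b) (Sf \<theta> a b) (Cf' \<theta> a b) (Sf' \<theta> a b) (adj2 A *v z))"
    by (rule continuous_on_compose2[OF jac_cont[OF cont_CS]])
      (auto intro: linear_continuous_on matrix_vector_mul_bounded_linear)
  then show "continuous_on UNIV (Dhmap A \<theta> a b)"
    unfolding Dhmap_def[abs_def] by (rule cont_conj)
qed



lemma emeasure_lebesgue_borel: "S \<in> sets borel \<Longrightarrow> emeasure lebesgue S = emeasure lborel S"
  by simp

lemma area_pres_general:
  fixes h g :: "real^2 \<Rightarrow> real^2"
  assumes C1h: "C1_with_deriv h Dh" and C1g: "C1_with_deriv g Dg"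
    and detg: "\<And>z. det (Dg z) = 1"
    and hg: "\<And>z. h (g z) = z" and gh: "\<And>z. g (h z) = z"
    and K: "compact K" and gout: "\<And>z. z \<notin> K \<Longrightarrow> g z = z" and gK: "g ` K \<subseteq> K"
  shows "area_preserving h"
proof -
  have dh: "\<And>z. (h has_derivative (\<lambda>v. Dh z *v v)) (at z)" using C1h by (simp add: C1_with_deriv_def)
  have dg: "\<And>z. (g has_derivative (\<lambda>v. Dg z *v v)) (at z)" using C1g by (simp add: C1_with_deriv_def)
  have conth: "continuous_on UNIV h"
    using dh by (meson has_derivative_continuous continuous_at_imp_continuous_on)
  then have hm: "h \<in> borel_measurable borel" by (rule borel_measurable_continuous_onI)
  have "emeasure lborel (h -` S) = emeasure lborel S" if S: "S \<in> sets borel" for S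
  proof -
    have pre: "h -` T = g ` T" for T
    proof
      show "h -` T \<subseteq> g ` T" using gh by (metis image_eqI subsetI vimageE)
      show "g ` T \<subseteq> h -` T" using hg by auto
    qed
    have SK: "S \<inter> K \<in> sets borel" "S - K \<in> sets borel"
      using S K by (auto intro: compact_imp_closed borel_closed)
    have gSK: "g ` (S \<inter> K) \<in> sets borel"
      using measurable_sets_borel[OF hm SK(1)] by (simp only: pre)
    have split: "g ` S = g ` (S \<inter> K) \<union> (S - K)"
    proof -
      have "g ` S = g ` (S \<inter> K) \<union> g ` (S - K)" by blast
      moreover have "g ` (S - K) = S - K" using gout by (auto simp: image_iff)
      ultimately show ?thesis by simp
    qed
    have disj: "g ` (S \<inter> K) \<inter> (S - K) = {}" using gK by blast
    have bK: "bounded K" using K by (rule compact_imp_bounded)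
    have lm1: "S \<inter> K \<in> lmeasurable"
      by (rule bounded_set_imp_lmeasurable) (use bK SK in \<open>auto intro: bounded_subset\<close>)
    have inj: "inj_on g (S \<inter> K)" by (metis hg inj_on_inverseI)
    have der: "\<And>x. x \<in> S \<inter> K \<Longrightarrow> (g has_derivative (\<lambda>v. Dg x *v v)) (at x within S \<inter> K)"
      using dg by (rule has_derivative_at_withinI)
    have int1: "((\<lambda>x. 1::real) has_integral measure lebesgue (S \<inter> K)) (S \<inter> K)"
      using lm1 by (metis lmeasurable_iff_integrable_on lmeasure_integral integrable_integral)
    have "g ` (S \<inter> K) \<in> lmeasurable \<and> measure lebesgue (g ` (S \<inter> K)) = measure lebesgue (S \<inter> K)"
      using has_measure_differentiable_image[OF _ der inj, of "measure lebesgue (S \<inter> K)"] lm1 int1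
      by (simp add: detg fmeasurableD)
    then have e1: "emeasure lborel (g ` (S \<inter> K)) = emeasure lborel (S \<inter> K)"
      using lm1 gSK SK
      by (metis emeasure_eq_measure2 emeasure_lebesgue_borel)
    have "emeasure lborel (h -` S) = emeasure lborel (g ` (S \<inter> K)) + emeasure lborel (S - K)"
      unfolding pre split using gSK SK disj by (simp add: plus_emeasure)
    also have "\<dots> = emeasure lborel (S \<inter> K) + emeasure lborel (S - K)" by (simp add: e1)
    also have "\<dots> = emeasure lborel S" using SK by (subst plus_emeasure) (auto simp: Int_Diff_Un)
    finally show ?thesis .
  qed
  then show ?thesis unfolding area_preserving_def using hm by auto
qed



lemma mm_minus_left: "(A::real^2^2) ** (B - C) = A ** B - A ** C"
  by (simp add: matrix_matrix_mult_def vec_eq_iff sum_subtractf right_diff_distrib)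
lemma mm_minus_right: "((B::real^2^2) - C) ** N = B ** N - C ** N"
  by (simp add: matrix_matrix_mult_def vec_eq_iff sum_subtractf left_diff_distrib)

lemma conj_minus: "det A = 1 \<Longrightarrow> A ** J ** adj2 A - mat 1 = A ** (J - mat 1) ** adj2 A"
  by (simp add: mm_minus_left mm_minus_right adj2_right)

lemma conj_minus': "det A = 1 \<Longrightarrow> adj2 A ** J ** A - mat 1 = adj2 A ** (J - mat 1) ** A"
  by (simp add: mm_minus_left mm_minus_right adj2_left)

lemma opnorm_conj: "opnorm (A ** J ** N) \<le> opnorm A * opnorm J * opnorm N"
proof -
  have "opnorm (A ** J ** N) \<le> opnorm (A ** J) * opnorm N" by (rule opnorm_mult)
  also have "\<dots> \<le> opnorm A * opnorm J * opnorm N"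
    by (intro mult_right_mono opnorm_mult opnorm_nonneg)
  finally show ?thesis .
qed

lemma adj_cancel1: "det A = 1 \<Longrightarrow> adj2 A *v (A *v y) = y"
  by (simp add: matrix_vector_mul_assoc adj2_left)
lemma adj_cancel2: "det A = 1 \<Longrightarrow> A *v (adj2 A *v y) = y"
  by (simp add: matrix_vector_mul_assoc adj2_right)

lemma det_adj2: "det (adj2 A) = det A"
  by (simp add: det2 adj2_def)

lemma hmap_A: "det A = 1 \<Longrightarrow> hmap A \<theta> a b (A *v y) = A *v twist (Cf \<theta> a b) (Sf \<theta> a b) y"
  by (simp add: hmap_def adj_cancel1)

lemma hmap_inv: "det A = 1 \<Longrightarrow> hmap A (-\<theta>) a b (hmap A \<theta> a b z) = z"
  unfolding hmap_def by (simp add: adj_cancel1 adj_cancel2 Cf_neg Sf_neg twist_inv[OF CS_sq])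

lemma hmap_inv2: "det A = 1 \<Longrightarrow> hmap A \<theta> a b (hmap A (-\<theta>) a b z) = z"
  using hmap_inv[of A "-\<theta>" a b z] by simp

lemma Dhmap_det: "det A = 1 \<Longrightarrow> det (Dhmap A \<theta> a b z) = 1"
  unfolding Dhmap_def by (simp add: det_mul det_adj2 jac_det[OF CS_sq CS_d])

lemma twist_norm': "norm (twist (Cf \<theta> a b) (Sf \<theta> a b) y) = norm y"
  by (rule twist_norm[OF CS_sq])

lemma hmap_ellipse:
  assumes "det A = 1"
  shows "hmap A \<theta> a b ` ((\<lambda>y. A *v y) ` cball 0 \<rho>) = (\<lambda>y. A *v y) ` cball 0 \<rho>"
proof
  show "hmap A \<theta> a b ` ((\<lambda>y. A *v y) ` cball 0 \<rho>) \<subseteq> (\<lambda>y. A *v y) ` cball 0 \<rho>"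
    using assms by (auto simp: hmap_A twist_norm')
  show "(\<lambda>y. A *v y) ` cball 0 \<rho> \<subseteq> hmap A \<theta> a b ` ((\<lambda>y. A *v y) ` cball 0 \<rho>)"
  proof
    fix z assume "z \<in> (\<lambda>y. A *v y) ` cball 0 \<rho>"
    then obtain y where y: "z = A *v y" "norm y \<le> \<rho>" by auto
    let ?w = "twist (Cf (-\<theta>) a b) (Sf (-\<theta>) a b) y"
    have "hmap A (-\<theta>) a b z = A *v ?w" using y assms by (simp add: hmap_A)
    then have "z = hmap A \<theta> a b (A *v ?w)" using hmap_inv2[OF assms, of \<theta> a b z] by simp
    moreover have "norm ?w \<le> \<rho>" using y by (simp only: twist_norm')
    ultimately show "z \<in> hmap A \<theta> a b ` ((\<lambda>y. A *v y) ` cball 0 \<rho>)" by auto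
  qed
qed

lemma hmap_outside:
  assumes "det A = 1" "a < b" "b = r^2" "0 < r" "z \<notin> (\<lambda>y. A *v y) ` cball 0 r"
  shows "hmap A \<theta> a b z = z"
proof -
  let ?y = "adj2 A *v z"
  have z: "z = A *v ?y" using adj_cancel2[OF assms(1)] by simp
  then have "norm ?y > r" using assms(5) by (metis image_eqI mem_cball_0 not_le)
  then have "nsq ?y \<ge> b" unfolding nsq_norm assms(3) using assms(4)
    by (intro power_mono) auto
  then have "twist (Cf \<theta> a b) (Sf \<theta> a b) ?y = ?y" by (rule twist_outside[OF assms(2)])
  then show ?thesis unfolding hmap_def using z by simp
qed

lemma hmap_inside:
  assumes "det A = 1" "a < b" "a = k * r^2" "0 \<le> k" "z \<in> (\<lambda>x. sqrt k *\<^sub>R x) ` ((\<lambda>y. A *v y) ` cball 0 r)"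
  shows "hmap A \<theta> a b z = (A ** mat2 (cos \<theta>) (- sin \<theta>) (sin \<theta>) (cos \<theta>) ** adj2 A) *v z"
proof -
  obtain y where y: "z = sqrt k *\<^sub>R (A *v y)" "norm y \<le> r"
    using assms(5) unfolding image_iff mem_cball_0 by (metis (no_types, lifting) image_iff mem_cball_0)
  have ay: "adj2 A *v z = sqrt k *\<^sub>R y" using y(1) by (simp add: matrix_vector_mult_scaleR adj_cancel1[OF assms(1)])
  have "nsq (adj2 A *v z) = k * (norm y)^2" unfolding ay nsq_norm using assms(4)
    by (simp add: power_mult_distrib)
  also have "\<dots> \<le> k * r^2" using y(2) assms(4) by (intro mult_left_mono power_mono) auto
  finally have "nsq (adj2 A *v z) \<le> a" using assms(3) by simp
  then show ?thesis unfolding hmap_def using assms(2)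
    by (simp add: twist_inside matrix_vector_mul_assoc matrix_mul_assoc)
qed



lemma rot_alg:
  fixes a b c d :: real
  assumes "a^2 + c^2 \<le> 1" "b^2 + d^2 \<le> 1" "a * d - b * c = 1"
  shows "d = a \<and> b = - c \<and> a^2 + c^2 = 1"
proof -
  have e: "(a - d)^2 + (b + c)^2 = (a^2 + c^2) + (b^2 + d^2) - 2 * (a * d - b * c)"
    by (simp add: power2_eq_square algebra_simps)
  have "(a - d)^2 + (b + c)^2 \<le> 0" unfolding e using assms by simp
  then have "(a - d)^2 = 0" "(b + c)^2 = 0"
    by (smt (verit) zero_le_power2)+
  then have "d = a" "b = - c" by auto
  moreover have "a^2 + c^2 = 1" using assms(3) \<open>d = a\<close> \<open>b = -c\<close> by (simp add: power2_eq_square)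
  ultimately show ?thesis by simp
qed

lemma norm_le_sq: "norm (x::real^2) \<le> r \<Longrightarrow> (x$1)^2 + (x$2)^2 \<le> r^2"
  using norm2_sq[of x] by (metis norm_ge_zero power_mono)

lemma M_rotation:
  assumes dA: "det A = 1" and dL: "det L = 1" and r: "0 < r"
    and LB: "(\<lambda>x. L *v x) ` ((\<lambda>y. A *v y) ` cball 0 r) = (\<lambda>y. A *v y) ` cball 0 r"
  defines "M \<equiv> adj2 A ** L ** A"
  shows "M$2$2 = M$1$1 \<and> M$1$2 = - M$2$1 \<and> (M$1$1)^2 + (M$2$1)^2 = 1"
proof -
  have dM: "det M = 1" unfolding M_def by (simp add: det_mul det_adj2 dA dL)
  have Mv: "M *v y = adj2 A *v (L *v (A *v y))" for y
    unfolding M_def by (simp add: matrix_vector_mul_assoc matrix_mul_assoc)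
  have P1: "norm (M *v y) \<le> r" if "norm y \<le> r" for y
  proof -
    have "L *v (A *v y) \<in> (\<lambda>x. L *v x) ` ((\<lambda>y. A *v y) ` cball 0 r)" using that by auto
    then obtain y' where "L *v (A *v y) = A *v y'" "norm y' \<le> r" unfolding LB by auto
    then show ?thesis unfolding Mv by (simp add: adj_cancel1[OF dA])
  qed
  have P2: "norm (adj2 M *v y) \<le> r" if "norm y \<le> r" for y
  proof -
    have "A *v y \<in> (\<lambda>x. L *v x) ` ((\<lambda>y. A *v y) ` cball 0 r)" unfolding LB using that by auto
    then obtain y' where y': "A *v y = L *v (A *v y')" "norm y' \<le> r" by auto
    then have "M *v y' = y" unfolding Mv by (metis adj_cancel1[OF dA])
    then have "adj2 M *v y = y'" using adj_cancel1[OF dM, of y'] by simp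
    then show ?thesis using y' by simp
  qed
  have n1: "norm (vec2 r 0) \<le> r" "norm (vec2 0 r) \<le> r" using r by (simp_all add: norm2)
  have q1: "(M$1$1 * r)^2 + (M$2$1 * r)^2 \<le> r^2"
    using norm_le_sq[OF P1[OF n1(1)]] by (simp add: mv_nth)
  have q2: "(M$1$2 * r)^2 + (M$2$2 * r)^2 \<le> r^2"
    using norm_le_sq[OF P1[OF n1(2)]] by (simp add: mv_nth)
  have q3: "(M$2$2 * r)^2 + (- M$2$1 * r)^2 \<le> r^2"
    using norm_le_sq[OF P2[OF n1(1)]] by (simp add: mv_nth adj2_def)
  have q4: "(- M$1$2 * r)^2 + (M$1$1 * r)^2 \<le> r^2"
    using norm_le_sq[OF P2[OF n1(2)]] by (simp add: mv_nth adj2_def)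
  have cancel: "(x * r)^2 + (y * r)^2 \<le> r^2 \<Longrightarrow> x^2 + y^2 \<le> 1" for x y
  proof -
    assume "(x * r)^2 + (y * r)^2 \<le> r^2"
    then have "(x^2 + y^2) * r^2 \<le> 1 * r^2" by (simp add: power_mult_distrib algebra_simps)
    then show ?thesis using r by (simp add: mult_le_cancel_right)
  qed
  have "M$1$1 * M$2$2 - M$1$2 * M$2$1 = 1" using dM by (simp add: det2)
  from rot_alg[OF cancel[OF q1] cancel[OF q2] this] show ?thesis by auto
qed



lemma scale_ellipse:
  assumes "0 < t"
  shows "(\<lambda>x. t *\<^sub>R x) ` ((\<lambda>y. A *v y) ` cball 0 r) = (\<lambda>y. (A::real^2^2) *v y) ` cball 0 (t * r)"
proof
  show "(\<lambda>x. t *\<^sub>R x) ` ((\<lambda>y. A *v y) ` cball 0 r) \<subseteq> (\<lambda>y. A *v y) ` cball 0 (t * r)"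
  proof
    fix z assume "z \<in> (\<lambda>x. t *\<^sub>R x) ` ((\<lambda>y. A *v y) ` cball 0 r)"
    then obtain y where y: "z = t *\<^sub>R (A *v y)" "norm y \<le> r" by (metis (no_types, lifting) image_iff mem_cball_0)
    then have "z = A *v (t *\<^sub>R y)" by (simp add: matrix_vector_mult_scaleR)
    moreover have "norm (t *\<^sub>R y) \<le> t * r" using y assms by (simp add: mult_left_mono)
    ultimately show "z \<in> (\<lambda>y. A *v y) ` cball 0 (t * r)" by auto
  qed
  show "(\<lambda>y. A *v y) ` cball 0 (t * r) \<subseteq> (\<lambda>x. t *\<^sub>R x) ` ((\<lambda>y. A *v y) ` cball 0 r)"
  proof
    fix z assume "z \<in> (\<lambda>y. A *v y) ` cball 0 (t * r)"
    then obtain y where y: "z = A *v y" "norm y \<le> t * r" by auto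
    then have "z = t *\<^sub>R (A *v (inverse t *\<^sub>R y))" using assms by (simp add: matrix_vector_mult_scaleR)
    moreover have "norm (inverse t *\<^sub>R y) \<le> r" using y assms
      by (simp add: field_simps)
    ultimately show "z \<in> (\<lambda>x. t *\<^sub>R x) ` ((\<lambda>y. A *v y) ` cball 0 r)" by auto
  qed
qed


theorem mainTheorem11:
  fixes \<epsilon>\<^sub>1 k E :: real
  assumes "\<epsilon>\<^sub>1 > 0" and "0 < k" and "k < 1" and "E \<ge> 1"
  shows "\<exists>\<epsilon>>0. \<forall>(B :: (real^2) set) (L :: real^2^2).
           centered_ellipse_ecc_le E B \<and> diameter B \<le> \<epsilon>\<^sub>1 \<and>
           det L = 1 \<and> opnorm (L - mat 1) < \<epsilon> \<and> (\<lambda>x. L *v x) ` B = B \<longrightarrow>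
           (\<exists>h Dh. C1_diffeo h \<and> area_preserving h \<and> C1_with_deriv h Dh \<and>
              (\<forall>z. z \<notin> B \<longrightarrow> h z = z) \<and>
              (\<forall>z \<in> (\<lambda>x. sqrt k *\<^sub>R x) ` B. h z = L *v z) \<and>
              (\<forall>t>0. h ` ((\<lambda>x. t *\<^sub>R x) ` B) = (\<lambda>x. t *\<^sub>R x) ` B) \<and>
              (\<forall>z. norm (h z - z) \<le> \<epsilon>\<^sub>1) \<and>
              (\<forall>z. opnorm (Dh z - mat 1) \<le> \<epsilon>\<^sub>1))"
proof -
  note e1 = assms(1) and k0 = assms(2) and k1 = assms(3) and E1 = assms(4)
  define K where "K = 4 * (1 + 4 * (2 / (1 - k)))"
  have "2 / (1 - k) > 0" using k1 by simp
  then have K0: "K > 0" unfolding K_def by (intro mult_pos_pos add_pos_pos) auto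
  have E0: "E > 0" using E1 by simp
  define \<epsilon> where "\<epsilon> = min (1 / (8 * E^2)) (\<epsilon>\<^sub>1 / (32 * E^4 * K))"
  have \<epsilon>0: "\<epsilon> > 0" unfolding \<epsilon>_def using E0 K0 e1 by simp
  have \<epsilon>a: "4 * E^2 * \<epsilon> \<le> 1/2"
  proof -
    have "\<epsilon> \<le> 1 / (8 * E^2)" unfolding \<epsilon>_def by simp
    then have "4 * E^2 * \<epsilon> \<le> 4 * E^2 * (1 / (8 * E^2))" using E0 by (intro mult_left_mono) auto
    also have "\<dots> = 1/2" using E0 by simp
    finally show ?thesis .
  qed
  have \<epsilon>b: "32 * E^4 * K * \<epsilon> \<le> \<epsilon>\<^sub>1"
  proof -
    have "\<epsilon> \<le> \<epsilon>\<^sub>1 / (32 * E^4 * K)" unfolding \<epsilon>_def by simp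
    then have "32 * E^4 * K * \<epsilon> \<le> 32 * E^4 * K * (\<epsilon>\<^sub>1 / (32 * E^4 * K))"
      using E0 K0 by (intro mult_left_mono) auto
    also have "\<dots> = \<epsilon>\<^sub>1" using E0 K0 by simp
    finally show ?thesis .
  qed
  show ?thesis
  proof (intro exI[of _ \<epsilon>] conjI allI impI \<epsilon>0)
    fix B :: "(real^2) set" and L :: "real^2^2"
    assume H: "centered_ellipse_ecc_le E B \<and> diameter B \<le> \<epsilon>\<^sub>1 \<and>
           det L = 1 \<and> opnorm (L - mat 1) < \<epsilon> \<and> (\<lambda>x. L *v x) ` B = B"
    then have diamB: "diameter B \<le> \<epsilon>\<^sub>1" and dL: "det L = 1" and nL: "opnorm (L - mat 1) < \<epsilon>"
      and LB: "(\<lambda>x. L *v x) ` B = B" by auto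
    from H obtain A r where dA: "det A = 1" and nA: "opnorm A \<le> E" and r: "r > 0"
      and Bdef: "B = (\<lambda>x. A *v x) ` cball 0 r"
      unfolding centered_ellipse_ecc_le_def by blast
    define M where "M = adj2 A ** L ** A"
    have Mrot: "M$2$2 = M$1$1 \<and> M$1$2 = - M$2$1 \<and> (M$1$1)^2 + (M$2$1)^2 = 1"
      unfolding M_def by (rule M_rotation[OF dA dL r LB[unfolded Bdef]])
    have nadj: "opnorm (adj2 A) \<le> 4 * E" using opnorm_adj2[of A] nA by simp
    have nM: "opnorm (M - mat 1) \<le> 4 * E^2 * \<epsilon>"
    proof -
      have "opnorm (M - mat 1) = opnorm (adj2 A ** (L - mat 1) ** A)"
        unfolding M_def by (simp add: conj_minus'[OF dA])
      also have "\<dots> \<le> opnorm (adj2 A) * opnorm (L - mat 1) * opnorm A" by (rule opnorm_conj)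
      also have "\<dots> \<le> (4 * E) * \<epsilon> * E"
        using nadj nL nA E0 \<epsilon>0 by (intro mult_mono opnorm_nonneg) auto
      finally show ?thesis by (simp add: power2_eq_square algebra_simps)
    qed
    define c where "c = M$1$1"
    define s where "s = M$2$1"
    have cs: "c^2 + s^2 = 1" using Mrot unfolding c_def s_def by simp
    have c1: "\<bar>c - 1\<bar> \<le> 4 * E^2 * \<epsilon>"
      using opnorm_ge_entry[of "M - mat 1" 1 1] nM unfolding c_def by simp
    have s1: "\<bar>s\<bar> \<le> 4 * E^2 * \<epsilon>"
      using opnorm_ge_entry[of "M - mat 1" 2 1] nM unfolding s_def by simp
    have cpos: "c \<ge> 1/2" using c1 \<epsilon>a by linarith
    define \<theta> where "\<theta> = arctan (s / c)"
    have sq: "sqrt (1 + (s / c)^2) = 1 / c"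
    proof -
      have "1 + (s / c)^2 = (1 / c)^2" using cs cpos by (simp add: field_simps power2_eq_square)
      then show ?thesis using cpos by simp
    qed
    have cos\<theta>: "cos \<theta> = c" unfolding \<theta>_def cos_arctan sq using cpos by simp
    have sin\<theta>: "sin \<theta> = s" unfolding \<theta>_def sin_arctan sq using cpos by simp
    have th: "\<bar>\<theta>\<bar> \<le> 8 * E^2 * \<epsilon>"
    proof -
      have "\<bar>\<theta>\<bar> \<le> \<bar>s / c\<bar>" unfolding \<theta>_def by (rule abs_arctan_le)
      also have "\<dots> = \<bar>s\<bar> / c" using cpos by (simp add: abs_divide)
      also have "\<dots> \<le> \<bar>s\<bar> / (1/2)" using cpos by (intro divide_left_mono) auto
      also have "\<dots> \<le> 8 * E^2 * \<epsilon>" using s1 by (simp add: algebra_simps)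
      finally show ?thesis .
    qed
    define a b where "a = k * r^2" and "b = r^2"
    have ab: "0 \<le> a" "a < b" unfolding a_def b_def using k0 k1 r by auto
    have bab: "2 * b / (b - a) = 2 / (1 - k)"
    proof -
      have "b - a = (1 - k) * r^2" unfolding a_def b_def by (simp add: algebra_simps)
      then show ?thesis unfolding b_def using r k1 by simp
    qed
    define h where "h = hmap A \<theta> a b"
    define Dh where "Dh = Dhmap A \<theta> a b"
    define g where "g = hmap A (-\<theta>) a b"
    have hg: "h \<circ> g = id" unfolding h_def g_def by (auto simp: hmap_inv2[OF dA])
    have gh: "g \<circ> h = id" unfolding h_def g_def by (auto simp: hmap_inv[OF dA])
    have compB: "compact B" unfolding Bdef
      by (intro compact_continuous_image linear_continuous_on matrix_vector_mul_bounded_linear compact_cball)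
    have hout: "h z = z" if "z \<notin> B" for z
      unfolding h_def by (rule hmap_outside[OF dA ab(2) b_def r that[unfolded Bdef]])
    have hB: "h ` B = B" unfolding h_def Bdef by (rule hmap_ellipse[OF dA])
    have rot: "mat2 (cos \<theta>) (- sin \<theta>) (sin \<theta>) (cos \<theta>) = M"
      using Mrot unfolding cos\<theta> sin\<theta> c_def s_def by (simp add: mat2_eq_iff)
    have AMA: "A ** M ** adj2 A = L"
      unfolding M_def by (simp add: matrix_mul_assoc adj2_right[OF dA])
         (simp add: matrix_mul_assoc[symmetric] adj2_right[OF dA])
    show "\<exists>h Dh. C1_diffeo h \<and> area_preserving h \<and> C1_with_deriv h Dh \<and>
              (\<forall>z. z \<notin> B \<longrightarrow> h z = z) \<and>
              (\<forall>z \<in> (\<lambda>x. sqrt k *\<^sub>R x) ` B. h z = L *v z) \<and>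
              (\<forall>t>0. h ` ((\<lambda>x. t *\<^sub>R x) ` B) = (\<lambda>x. t *\<^sub>R x) ` B) \<and>
              (\<forall>z. norm (h z - z) \<le> \<epsilon>\<^sub>1) \<and>
              (\<forall>z. opnorm (Dh z - mat 1) \<le> \<epsilon>\<^sub>1)"
    proof (intro exI[of _ h] exI[of _ Dh] conjI allI impI ballI)
      show "C1_diffeo h"
        unfolding C1_diffeo_def
      proof (intro conjI exI)
        show "bij h" by (rule o_bij[OF gh hg])
        show "C1_with_deriv h Dh" unfolding h_def Dh_def by (rule hmap_C1)
        show "C1_with_deriv (inv h) (Dhmap A (-\<theta>) a b)"
          unfolding inv_unique_comp[OF hg gh] g_def by (rule hmap_C1)
      qed
      show "area_preserving h"
      proof (rule area_pres_general[where g=g and Dg="Dhmap A (-\<theta>) a b" and K=B])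
        show "C1_with_deriv h Dh" unfolding h_def Dh_def by (rule hmap_C1)
        show "C1_with_deriv g (Dhmap A (-\<theta>) a b)" unfolding g_def by (rule hmap_C1)
        show "det (Dhmap A (-\<theta>) a b z) = 1" for z by (rule Dhmap_det[OF dA])
        show "h (g z) = z" for z using hg by (metis comp_apply id_apply)
        show "g (h z) = z" for z using gh by (metis comp_apply id_apply)
        show "compact B" by (rule compB)
        show "g z = z" if "z \<notin> B" for z
          unfolding g_def by (rule hmap_outside[OF dA ab(2) b_def r that[unfolded Bdef]])
        show "g ` B \<subseteq> B" unfolding g_def Bdef by (simp add: hmap_ellipse[OF dA])
      qed
      show "C1_with_deriv h Dh" unfolding h_def Dh_def by (rule hmap_C1)
      show "h z = z" if "z \<notin> B" for z using hout that .
      show "h z = L *v z" if "z \<in> (\<lambda>x. sqrt k *\<^sub>R x) ` B" for z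
      proof -
        have "h z = (A ** mat2 (cos \<theta>) (- sin \<theta>) (sin \<theta>) (cos \<theta>) ** adj2 A) *v z"
          unfolding h_def by (rule hmap_inside[OF dA ab(2) a_def _ that[unfolded Bdef]]) (use k0 in simp)
        then show ?thesis unfolding rot AMA .
      qed
      show "h ` ((\<lambda>x. t *\<^sub>R x) ` B) = (\<lambda>x. t *\<^sub>R x) ` B" if "t > 0" for t
        unfolding Bdef scale_ellipse[OF that] h_def by (rule hmap_ellipse[OF dA])
      show "norm (h z - z) \<le> \<epsilon>\<^sub>1" for z
      proof (cases "z \<in> B")
        case True
        then have "h z \<in> B" using hB by blast
        then have "dist (h z) z \<le> diameter B"
          using True compB by (intro diameter_bounded_bound compact_imp_bounded)
        then show ?thesis using diamB by (simp add: dist_norm)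
      next
        case False
        then show ?thesis using hout e1 by simp
      qed
      show "opnorm (Dh z - mat 1) \<le> \<epsilon>\<^sub>1" for z
      proof -
        let ?J = "jac (Cf \<theta> a b) (Sf \<theta> a b) (Cf' \<theta> a b) (Sf' \<theta> a b) (adj2 A *v z)"
        have nJ: "opnorm (?J - mat 1) \<le> K * \<bar>\<theta>\<bar>"
          using jac_bound[OF ab, of \<theta> "adj2 A *v z"] unfolding bab K_def by (simp add: algebra_simps)
        have "opnorm (Dh z - mat 1) = opnorm (A ** (?J - mat 1) ** adj2 A)"
          unfolding Dh_def Dhmap_def by (simp add: conj_minus[OF dA])
        also have "\<dots> \<le> opnorm A * opnorm (?J - mat 1) * opnorm (adj2 A)" by (rule opnorm_conj)
        also have "\<dots> \<le> E * (K * (8 * E^2 * \<epsilon>)) * (4 * E)"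
        proof (intro mult_mono opnorm_nonneg nA nadj)
          show "opnorm (?J - mat 1) \<le> K * (8 * E^2 * \<epsilon>)"
            using nJ th K0 by (meson mult_left_mono less_imp_le order_trans)
        qed (use E0 K0 \<epsilon>0 in auto)
        also have "\<dots> = 32 * E^4 * K * \<epsilon>" by (simp add: power2_eq_square power4_eq_xxxx algebra_simps)
        also have "\<dots> \<le> \<epsilon>\<^sub>1" by (rule \<epsilon>b)
        finally show ?thesis .
      qed
    qed
  qed
qed


end
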